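(* Let $E$ be a real Hilbert space with $\dim(E)\ge2$, $h\in E$ a unit vector, and $f:\mathbb{R}_{\ge0}\to\mathbb{R}_{\ge0}$ with $f(d)>0$ iff $d>0$. Let $x\preceq_f y\iff f(\|y_\perp-x_\perp\|)\le y_h-x_h$. Assume that $\preceq_f$ is topologically closed in $E\times E$, and that $f$ is square-superadditive, or merely superadditive in case $\dim(E)=2$. Then every pair of elements of $E$ has a join in $(E,\preceq_f)$.
   Context: For $x\in E$ write $x=x_h h+x_\perp$ with $x_h=(x,h)$ and $x_\perp$ orthogonal to $h$. The join of $P\subseteq E$ is an $x$ with $p\preceq_f x$ for all $p\in P$ and $x\preceq_f y$ for every $y$ with $p\preceq_f y$ for all $p\in P$. $f$ is superadditive if $f(x+y)\ge f(x)+f(y)$ for all $x,y\ge0$, and square-superadditive if $f(\sqrt{x^2+y^2})\ge f(x)+f(y)$ for all $x,y\ge0$. *)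

theory Defs
  imports "HOL-Analysis.Analysis"
begin

definition dim_ge2 :: "'a::real_vector itself \<Rightarrow> bool" where
  "dim_ge2 _ \<longleftrightarrow> (\<exists>u v::'a. u \<noteq> v \<and> independent {u, v})"

definition dim_eq2 :: "'a::real_vector itself \<Rightarrow> bool" where
  "dim_eq2 _ \<longleftrightarrow> (\<exists>u v::'a. u \<noteq> v \<and> independent {u, v} \<and> span {u, v} = UNIV)"

definition hcomp :: "'a::real_inner \<Rightarrow> 'a \<Rightarrow> real" where
  "hcomp h x = inner x h"

definition perp :: "'a::real_inner \<Rightarrow> 'a \<Rightarrow> 'a" where
  "perp h x = x - inner x h *\<^sub>R h"

definition prec :: "(real \<Rightarrow> real) \<Rightarrow> 'a::real_inner \<Rightarrow> 'a \<Rightarrow> 'a \<Rightarrow> bool" where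
  "prec f h x y \<longleftrightarrow> f (norm (perp h y - perp h x)) \<le> hcomp h y - hcomp h x"

definition is_join :: "(real \<Rightarrow> real) \<Rightarrow> 'a::real_inner \<Rightarrow> 'a set \<Rightarrow> 'a \<Rightarrow> bool" where
  "is_join f h P x \<longleftrightarrow> (\<forall>p\<in>P. prec f h p x) \<and>
     (\<forall>y. (\<forall>p\<in>P. prec f h p y) \<longrightarrow> prec f h x y)"

definition superadditive :: "(real \<Rightarrow> real) \<Rightarrow> bool" where
  "superadditive f \<longleftrightarrow> (\<forall>x y. x \<ge> 0 \<longrightarrow> y \<ge> 0 \<longrightarrow> f (x + y) \<ge> f x + f y)"

definition square_superadditive :: "(real \<Rightarrow> real) \<Rightarrow> bool" where
  "square_superadditive f \<longleftrightarrow>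
     (\<forall>x y. x \<ge> 0 \<longrightarrow> y \<ge> 0 \<longrightarrow> f (sqrt (x\<^sup>2 + y\<^sup>2)) \<ge> f x + f y)"

end

theory Submission imports Defs begin

lemma inner_hh: "norm (h::'a::real_inner) = 1 \<Longrightarrow> inner h h = 1"
  by (metis power2_norm_eq_inner power_one)

lemma perp_orth: "norm (h::'a::real_inner) = 1 \<Longrightarrow> inner (perp h x) h = 0"
  by (simp add: perp_def inner_diff_left inner_hh)

lemma perp_lin: "norm (h::'a::real_inner) = 1 \<Longrightarrow> inner e h = 0 \<Longrightarrow>
   perp h (a + c *\<^sub>R e + t *\<^sub>R h) = perp h a + c *\<^sub>R e"
  by (simp add: perp_def inner_add_left inner_hh algebra_simps)

lemma hcomp_lin: "norm (h::'a::real_inner) = 1 \<Longrightarrow> inner e h = 0 \<Longrightarrow>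
   hcomp h (a + c *\<^sub>R e + t *\<^sub>R h) = hcomp h a + t"
  by (simp add: hcomp_def inner_add_left inner_hh)

lemma perp_diff: "perp h y - perp h x = perp h (y - x)"
  by (simp add: perp_def inner_diff_left algebra_simps)

lemma f_mono:
  assumes nn: "\<forall>d\<ge>0. f d \<ge> (0::real)"
    and cond: "square_superadditive f \<or> superadditive f"
    and p: "0 \<le> p" "p \<le> q"
  shows "f p \<le> f q"
  using cond
proof
  assume sq: "square_superadditive f"
  define r where "r = sqrt (q^2 - p^2)"
  have r0: "r \<ge> 0" unfolding r_def using p by simp
  have "sqrt (p^2 + r^2) = q" unfolding r_def using p
    by (simp add: power_mono)
  then have "f q \<ge> f p + f r" using sq p r0 unfolding square_superadditive_def by metis
  moreover have "f r \<ge> 0" using nn r0 by auto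
  ultimately show ?thesis by linarith
next
  assume sa: "superadditive f"
  have "f (p + (q - p)) \<ge> f p + f (q - p)" using sa p unfolding superadditive_def
    by (metis diff_ge_0_iff_ge)
  moreover have "f (q - p) \<ge> 0" using nn p by auto
  ultimately show ?thesis by simp
qed

lemma collinear_2d:
  fixes A B h :: "'a::real_inner"
  assumes d2: "dim_eq2 TYPE('a)" and hn: "norm h = 1"
    and Ah: "inner A h = 0" and Bh: "inner B h = 0"
  shows "\<exists>g d. (g \<noteq> 0 \<or> d \<noteq> 0) \<and> g *\<^sub>R A + d *\<^sub>R B = 0"
proof (cases "A = 0 \<or> B = 0 \<or> A = B")
  case True
  then consider "A = 0" | "B = 0" | "A = B" by blast
  then show ?thesis
  proof cases
    case 1 then show ?thesis by (intro exI[of _ 1] exI[of _ 0]) simp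
  next
    case 2 then show ?thesis by (intro exI[of _ 0] exI[of _ 1]) simp
  next
    case 3 then show ?thesis by (intro exI[of _ 1] exI[of _ "-1"]) simp
  qed
next
  case False
  obtain u v :: 'a where uv: "independent {u, v}" "span {u, v} = UNIV"
    using d2 unfolding dim_eq2_def by blast
  have hA: "h \<noteq> A" using Ah hn inner_hh by force
  have hB: "h \<noteq> B" using Bh hn inner_hh by force
  have "\<not> independent {h, A, B}"
  proof
    assume ind: "independent {h, A, B}"
    have "finite {h, A, B} \<and> card {h, A, B} \<le> card {u, v}"
      by (rule independent_span_bound) (use ind uv in auto)
    moreover have "card {h, A, B} = 3" using False hA hB by auto
    moreover have "card {u, v} \<le> 2" by (simp add: card_insert_le_m1)
    ultimately show False by simp
  qed
  then obtain w where w: "\<exists>x\<in>{h, A, B}. w x \<noteq> 0" "(\<Sum>x\<in>{h, A, B}. w x *\<^sub>R x) = 0"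
    using dependent_finite[of "{h, A, B}"] by auto
  have sum: "w h *\<^sub>R h + w A *\<^sub>R A + w B *\<^sub>R B = 0"
    using w(2) False hA hB by (simp add: add.assoc)
  have "inner (w h *\<^sub>R h + w A *\<^sub>R A + w B *\<^sub>R B) h = w h"
    using Ah Bh hn by (simp add: inner_add_left inner_hh)
  then have wh: "w h = 0" using sum by simp
  show ?thesis
    apply (rule exI[of _ "w A"], rule exI[of _ "w B"])
    using w(1) wh sum by auto
qed

lemma norm_add_2d:
  fixes A B h :: "'a::real_inner"
  assumes d2: "dim_eq2 TYPE('a)" and hn: "norm h = 1"
    and Ah: "inner A h = 0" and Bh: "inner B h = 0" and AB: "inner A B \<ge> 0"
  shows "norm (A + B) = norm A + norm B"
proof -
  obtain g d where gd: "g \<noteq> 0 \<or> d \<noteq> 0" "g *\<^sub>R A + d *\<^sub>R B = 0"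
    using collinear_2d[OF d2 hn Ah Bh] by blast
  show ?thesis
  proof (cases "A = 0")
    case True then show ?thesis by simp
  next
    case An: False
    have d0: "d \<noteq> 0" using gd An by auto
    define m where "m = - g / d"
    have "d *\<^sub>R B = - g *\<^sub>R A" using gd(2) by (simp add: eq_neg_iff_add_eq_0 add.commute)
    then have "(1/d) *\<^sub>R (d *\<^sub>R B) = (1/d) *\<^sub>R (- g *\<^sub>R A)" by simp
    then have Bm: "B = m *\<^sub>R A" using d0 unfolding m_def by simp
    have "inner A B = m * (norm A)^2" using Bm by (simp add: power2_norm_eq_inner)
    then have m0: "m \<ge> 0" using AB An by (simp add: zero_le_mult_iff)
    have "A + B = (1 + m) *\<^sub>R A" using Bm by (simp add: algebra_simps)
    then have "norm (A + B) = (1 + m) * norm A" using m0 by simp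
    moreover have "norm B = m * norm A" using Bm m0 by simp
    ultimately show ?thesis by (simp add: algebra_simps)
  qed
qed

lemma split_lemma:
  fixes A B h :: "'a::real_inner"
  assumes hn: "norm h = 1"
    and nn: "\<forall>d\<ge>0. f d \<ge> (0::real)"
    and cond: "square_superadditive f \<or> (superadditive f \<and> dim_eq2 TYPE('a))"
    and Ah: "inner A h = 0" and Bh: "inner B h = 0" and AB: "inner A B \<ge> 0"
  shows "f (norm A) + f (norm B) \<le> f (norm (A + B))"
  using cond
proof
  assume sq: "square_superadditive f"
  have "(norm (A + B))^2 = (norm A)^2 + (norm B)^2 + 2 * inner A B"
    by (simp add: power2_norm_eq_inner inner_add_left inner_add_right inner_commute)
  then have le: "sqrt ((norm A)^2 + (norm B)^2) \<le> norm (A + B)"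
    using AB by (intro real_le_lsqrt) auto
  have "f (norm A) + f (norm B) \<le> f (sqrt ((norm A)^2 + (norm B)^2))"
    using sq unfolding square_superadditive_def by simp
  also have "\<dots> \<le> f (norm (A + B))"
    using f_mono[OF nn _ _ le] sq by simp
  finally show ?thesis .
next
  assume sa: "superadditive f \<and> dim_eq2 TYPE('a)"
  then show ?thesis using norm_add_2d[OF _ hn Ah Bh AB] unfolding superadditive_def by simp
qed

lemma left_cont:
  fixes h e :: "'a::real_inner"
  assumes hn: "norm h = 1" and en: "norm e = 1" and eh: "inner e h = 0"
    and cl: "closed {(x, y). prec f h x y}"
    and p: "p > 0" and ep: "\<epsilon> > 0"
  shows "\<exists>s0. 0 \<le> s0 \<and> s0 < p \<and> f s0 > f p - \<epsilon>"
proof (rule ccontr)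
  assume "\<not> ?thesis"
  then have H: "\<And>s. 0 \<le> s \<Longrightarrow> s < p \<Longrightarrow> f s \<le> f p - \<epsilon>" by force
  define t where "t = f p - \<epsilon>"
  define g where "g = (\<lambda>s. ((0::'a), s *\<^sub>R e + t *\<^sub>R h))"
  have P0: "\<And>s t. perp h (s *\<^sub>R e + t *\<^sub>R h) = s *\<^sub>R e"
    using perp_lin[OF hn eh, of 0] by (simp add: perp_def)
  have H0: "\<And>s t. hcomp h (s *\<^sub>R e + t *\<^sub>R h) = t"
    using hcomp_lin[OF hn eh, of 0] by (simp add: hcomp_def)
  have p00: "perp h 0 = 0" "hcomp h 0 = 0" by (simp_all add: perp_def hcomp_def)
  have ev: "eventually (\<lambda>s. g s \<in> {(x, y). prec f h x y}) (at_left p)"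
    using eventually_at_left_real[OF p]
  proof (rule eventually_mono)
    fix s assume "s \<in> {0<..<p}"
    then show "g s \<in> {(x, y). prec f h x y}"
      using H[of s] unfolding prec_def g_def by (simp add: P0 H0 p00 en t_def)
  qed
  have lim: "(g \<longlongrightarrow> (0, p *\<^sub>R e + t *\<^sub>R h)) (at_left p)"
    unfolding g_def by (intro tendsto_intros)
  have "(0, p *\<^sub>R e + t *\<^sub>R h) \<in> {(x, y). prec f h x y}"
    by (rule Lim_in_closed_set[OF cl ev _ lim]) simp
  then have "f p \<le> t" unfolding prec_def using p by (simp add: P0 H0 p00 en)
  then show False using ep t_def by simp
qed

theorem mainTheorem17:
  fixes f :: "real \<Rightarrow> real" and h :: "'a::{real_inner, complete_space}"
  assumes dim: "dim_ge2 TYPE('a)"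
    and h_unit: "norm h = 1"
    and f_nonneg: "\<forall>d\<ge>0. f d \<ge> 0"
    and f_pos: "\<forall>d\<ge>0. f d > 0 \<longleftrightarrow> d > 0"
    and closed_rel: "closed {(x, y). prec f h x y}"
    and f_cond: "square_superadditive f \<or> (superadditive f \<and> dim_eq2 TYPE('a))"
  shows "\<forall>a b. \<exists>x. is_join f h {a, b} x"
proof (intro allI)
  fix a b :: 'a
  have f0: "f 0 = 0" using f_nonneg f_pos by force
  have mono: "\<And>p q. 0 \<le> p \<Longrightarrow> p \<le> q \<Longrightarrow> f p \<le> f q"
    using f_mono[OF f_nonneg] f_cond by blast
  have split: "\<And>A B. inner A h = 0 \<Longrightarrow> inner B h = 0 \<Longrightarrow> inner A B \<ge> 0 \<Longrightarrow>
      f (norm A) + f (norm B) \<le> f (norm (A + B))"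
    using split_lemma[OF h_unit f_nonneg f_cond] by blast
  define W where "W = perp h b - perp h a"
  define D where "D = norm W"
  define \<beta> where "\<beta> = hcomp h b - hcomp h a"
  show "\<exists>x. is_join f h {a, b} x"
  proof (cases "prec f h a b")
    case True
    show ?thesis apply (rule exI[of _ b]) using True f0 unfolding is_join_def prec_def by auto
  next
    case nab: False
    show ?thesis
    proof (cases "prec f h b a")
      case True
      show ?thesis apply (rule exI[of _ a]) using True f0 unfolding is_join_def prec_def by auto
    next
      case nba: False
      have fDb: "f D > \<beta>" using nab unfolding prec_def W_def D_def \<beta>_def by simp
      have fDb2: "f D > - \<beta>" using nba unfolding prec_def W_def D_def \<beta>_def
        by (simp add: norm_minus_commute)
      have D0: "D > 0"
      proof (rule ccontr)
        assume "\<not> D > 0"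
        then have "D = 0" unfolding D_def by simp
        then show False using fDb fDb2 f0 by simp
      qed
      define e where "e = (1/D) *\<^sub>R W"
      have Wh: "inner W h = 0" unfolding W_def using perp_orth[OF h_unit]
        by (simp add: inner_diff_left)
      have eh: "inner e h = 0" unfolding e_def using Wh by simp
      have en: "norm e = 1" unfolding e_def using D0 D_def by simp
      have We: "W = D *\<^sub>R e" unfolding e_def using D0 by simp
      define S where "S = {s. 0 \<le> s \<and> s \<le> D \<and> f s \<le> \<beta> + f (D - s)}"
      define c where "c = Sup S"
      have S0: "0 \<in> S" unfolding S_def using fDb2 f0 D0 by simp
      have bdd: "bdd_above S" unfolding S_def by (rule bdd_aboveI[of _ D]) auto
      have c0: "0 \<le> c" unfolding c_def using cSup_upper[OF S0 bdd] .
      have cD: "c \<le> D" unfolding c_def using S0 by (intro cSup_least) (auto simp: S_def)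
      have below: "f s \<le> \<beta> + f (D - s)" if "0 \<le> s" "s < c" for s
      proof -
        obtain s' where s': "s' \<in> S" "s < s'" using \<open>s < c\<close> less_cSup_iff[OF _ bdd] S0
          unfolding c_def by blast
        then have "f s \<le> f s'" using mono that by (simp add: S_def)
        also have "\<dots> \<le> \<beta> + f (D - s')" using s' by (simp add: S_def)
        also have "\<dots> \<le> \<beta> + f (D - s)" using mono[of "D - s'" "D - s"] s' by (simp add: S_def)
        finally show ?thesis .
      qed
      have above: "f s > \<beta> + f (D - s)" if "c < s" "s \<le> D" for s
      proof (rule ccontr)
        assume "\<not> ?thesis"
        then have "s \<in> S" unfolding S_def using that c0 by simp
        then have "s \<le> c" unfolding c_def using cSup_upper[OF _ bdd] by blast
        then show False using that by simp
      qed
      define \<tau> where "\<tau> = max (f c) (\<beta> + f (D - c))"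
      define x where "x = a + c *\<^sub>R e + \<tau> *\<^sub>R h"
      have Px: "perp h x = perp h a + c *\<^sub>R e" unfolding x_def using perp_lin[OF h_unit eh] .
      have Hx: "hcomp h x = hcomp h a + \<tau>" unfolding x_def using hcomp_lin[OF h_unit eh] .
      have ax: "prec f h a x" unfolding prec_def using Px Hx c0 en \<tau>_def by simp
      have bx: "prec f h b x"
      proof -
        have "perp h x - perp h b = (c - D) *\<^sub>R e" using Px We W_def
          by (simp add: algebra_simps)
        then have "norm (perp h x - perp h b) = D - c" using en cD by simp
        moreover have "hcomp h x - hcomp h b = \<tau> - \<beta>" using Hx \<beta>_def by simp
        ultimately show ?thesis unfolding prec_def \<tau>_def by simp
      qed
      have least: "prec f h x y" if ay: "prec f h a y" and byy: "prec f h b y" for y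
      proof -
        define Y where "Y = perp h y - perp h a"
        define \<sigma> where "\<sigma> = inner Y e"
        define L where "L = hcomp h y - hcomp h a"
        have Yh: "inner Y h = 0" unfolding Y_def using perp_orth[OF h_unit]
          by (simp add: inner_diff_left)
        have H1: "f (norm Y) \<le> L" using ay unfolding prec_def Y_def L_def .
        have H2: "f (norm (Y - D *\<^sub>R e)) \<le> L - \<beta>"
        proof -
          have "perp h y - perp h b = Y - D *\<^sub>R e" using We unfolding Y_def W_def by (simp add: algebra_simps)
          moreover have "hcomp h y - hcomp h b = L - \<beta>" unfolding L_def \<beta>_def by simp
          ultimately show ?thesis using byy unfolding prec_def by simp
        qed
        have gen: "prec f h (a + s *\<^sub>R e + t *\<^sub>R h) y \<longleftrightarrow> f (norm (Y - s *\<^sub>R e)) \<le> L - t" for s t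
          unfolding prec_def using perp_lin[OF h_unit eh] hcomp_lin[OF h_unit eh]
          by (simp add: Y_def L_def algebra_simps)
        have goal: "prec f h x y \<longleftrightarrow> f (norm (Y - c *\<^sub>R e)) \<le> L - \<tau>"
          unfolding x_def by (rule gen)
        have asplit: "f s + f (norm (Y - s *\<^sub>R e)) \<le> f (norm Y)" if "0 \<le> s" "s \<le> \<sigma>" for s
        proof -
          have "inner (s *\<^sub>R e) (Y - s *\<^sub>R e) = s * (\<sigma> - s)"
            using en by (simp add: \<sigma>_def inner_diff_right inner_commute power2_norm_eq_inner[symmetric] algebra_simps power2_eq_square)
          also have "\<dots> \<ge> 0" using that by simp
          finally have ip: "0 \<le> inner (s *\<^sub>R e) (Y - s *\<^sub>R e)" .
          have "f (norm (s *\<^sub>R e)) + f (norm (Y - s *\<^sub>R e)) \<le> f (norm (s *\<^sub>R e + (Y - s *\<^sub>R e)))"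
            by (rule split) (use ip eh Yh in \<open>simp_all add: inner_diff_left\<close>)
          then show ?thesis using en that by simp
        qed
        have bsplit: "f (D - s) + f (norm (Y - s *\<^sub>R e)) \<le> f (norm (Y - D *\<^sub>R e))"
          if "s \<le> D" "\<sigma> \<le> s" for s
        proof -
          have "inner ((s - D) *\<^sub>R e) (Y - s *\<^sub>R e) = (s - D) * (\<sigma> - s)"
            using en by (simp add: \<sigma>_def inner_diff_right inner_commute power2_norm_eq_inner[symmetric] algebra_simps power2_eq_square)
          also have "\<dots> \<ge> 0" using that by (simp add: mult_nonpos_nonpos)
          finally have ip: "0 \<le> inner ((s - D) *\<^sub>R e) (Y - s *\<^sub>R e)" .
          have "f (norm ((s - D) *\<^sub>R e)) + f (norm (Y - s *\<^sub>R e)) \<le> f (norm ((s - D) *\<^sub>R e + (Y - s *\<^sub>R e)))"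
            by (rule split) (use ip eh Yh in \<open>simp_all add: inner_diff_left\<close>)
          moreover have "(s - D) *\<^sub>R e + (Y - s *\<^sub>R e) = Y - D *\<^sub>R e" by (simp add: algebra_simps)
          moreover have "norm ((s - D) *\<^sub>R e) = D - s" using en that by simp
          ultimately show ?thesis by simp
        qed
        show "prec f h x y"
        proof (cases "f c > \<beta> + f (D - c)")
          case True
          then have \<tau>c: "\<tau> = f c" unfolding \<tau>_def by simp
          show ?thesis
          proof (cases "\<sigma> \<ge> c")
            case True
            then show ?thesis using asplit[OF c0 True] H1 goal \<tau>c by simp
          next
            case False
            have cpos: "c > 0"
            proof (rule ccontr)
              assume "\<not> c > 0" then have "c = 0" using c0 by simp
              then show False using \<open>f c > \<beta> + f (D - c)\<close> fDb2 f0 by simp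
            qed
            define m where "m = max \<sigma> 0"
            have mc: "m < c" using False cpos m_def by simp
            define g where "g = (\<lambda>s. (a + s *\<^sub>R e + f s *\<^sub>R h, y))"
            have ev: "eventually (\<lambda>s. g s \<in> {(x, y). prec f h x y}) (at_left c)"
              using eventually_at_left_real[OF mc]
            proof (rule eventually_mono)
              fix s assume s: "s \<in> {m<..<c}"
              then have s0: "0 \<le> s" "\<sigma> \<le> s" "s < c" "s \<le> D" using m_def cD by auto
              have "f (D - s) + f (norm (Y - s *\<^sub>R e)) \<le> L - \<beta>"
                using bsplit[OF s0(4) s0(2)] H2 by simp
              moreover have "f s \<le> \<beta> + f (D - s)" using below s0 by simp
              ultimately have "f (norm (Y - s *\<^sub>R e)) \<le> L - f s" by simp
              then show "g s \<in> {(x, y). prec f h x y}" unfolding g_def using gen by simp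
            qed
            have ftend: "(f \<longlongrightarrow> f c) (at_left c)"
              unfolding tendsto_iff
            proof (intro allI impI)
              fix \<epsilon> :: real assume ep: "\<epsilon> > 0"
              obtain s0 where s0: "0 \<le> s0" "s0 < c" "f s0 > f c - \<epsilon>"
                using left_cont[OF h_unit en eh closed_rel cpos ep] by blast
              show "eventually (\<lambda>s. dist (f s) (f c) < \<epsilon>) (at_left c)"
                using eventually_at_left_real[OF s0(2)]
              proof (rule eventually_mono)
                fix s assume "s \<in> {s0<..<c}"
                then have "f s0 \<le> f s" "f s \<le> f c" using mono s0 by auto
                then show "dist (f s) (f c) < \<epsilon>" using s0 by (simp add: dist_real_def)
              qed
            qed
            have "(g \<longlongrightarrow> (x, y)) (at_left c)"
              unfolding g_def x_def \<tau>c by (intro tendsto_intros ftend)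
            then have "(x, y) \<in> {(x, y). prec f h x y}"
              by (intro Lim_in_closed_set[OF closed_rel ev]) simp_all
            then show ?thesis by simp
          qed
        next
          case False
          then have \<tau>c: "\<tau> = \<beta> + f (D - c)" unfolding \<tau>_def by simp
          show ?thesis
          proof (cases "\<sigma> \<le> c")
            case True
            then show ?thesis using bsplit[OF cD True] H2 goal \<tau>c by simp
          next
            case s_gt: False
            show ?thesis
            proof (cases "c = D")
              case True
              then show ?thesis using H2 goal \<tau>c f0 by simp
            next
              case False
              then have cD': "c < D" using cD by simp
              define m where "m = min \<sigma> D"
              have mc: "c < m" using s_gt cD' m_def by simp
              define g where "g = (\<lambda>s. (a + s *\<^sub>R e + (\<beta> + f (D - s)) *\<^sub>R h, y))"
              have ev: "eventually (\<lambda>s. g s \<in> {(x, y). prec f h x y}) (at_right c)"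
                using eventually_at_right_real[OF mc]
              proof (rule eventually_mono)
                fix s assume s: "s \<in> {c<..<m}"
                then have s0: "0 \<le> s" "s \<le> \<sigma>" "c < s" "s \<le> D" using m_def c0 by auto
                have "f s + f (norm (Y - s *\<^sub>R e)) \<le> L"
                  using asplit[OF s0(1) s0(2)] H1 by simp
                moreover have "f s > \<beta> + f (D - s)" using above s0 by simp
                ultimately have "f (norm (Y - s *\<^sub>R e)) \<le> L - (\<beta> + f (D - s))" by simp
                then show "g s \<in> {(x, y). prec f h x y}" unfolding g_def using gen by simp
              qed
              have pp: "D - c > 0" using cD' by simp
              have ftend: "((\<lambda>s. f (D - s)) \<longlongrightarrow> f (D - c)) (at_right c)"
                unfolding tendsto_iff
              proof (intro allI impI)
                fix \<epsilon> :: real assume ep: "\<epsilon> > 0"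
                obtain s0 where s0: "0 \<le> s0" "s0 < D - c" "f s0 > f (D - c) - \<epsilon>"
                  using left_cont[OF h_unit en eh closed_rel pp ep] by blast
                have lt: "c < D - s0" using s0 by simp
                show "eventually (\<lambda>s. dist (f (D - s)) (f (D - c)) < \<epsilon>) (at_right c)"
                  using eventually_at_right_real[OF lt]
                proof (rule eventually_mono)
                  fix s assume "s \<in> {c<..<D - s0}"
                  then have "f s0 \<le> f (D - s)" "f (D - s) \<le> f (D - c)" using mono s0 by auto
                  then show "dist (f (D - s)) (f (D - c)) < \<epsilon>" using s0 by (simp add: dist_real_def)
                qed
              qed
              have "(g \<longlongrightarrow> (x, y)) (at_right c)"
                unfolding g_def x_def \<tau>c by (intro tendsto_intros ftend)
              then have "(x, y) \<in> {(x, y). prec f h x y}"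
                by (intro Lim_in_closed_set[OF closed_rel ev]) simp_all
              then show ?thesis by simp
            qed
          qed
        qed
      qed
      show ?thesis
        apply (rule exI[of _ x])
        unfolding is_join_def using ax bx least by auto
    qed
  qed
qed

end
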